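(* Let $(p,f)$ be an SCF-RT rationalizable within the class of all RUM-CFs, and let $x,y\in X$. If $(x,y)\in T(R^{rt})$, then every RUM-CF $(u,g,r)$ rationalizing $(p,f)$ satisfies $u(x)\geq u(y)$. If $(x,y)\in T_P(R^{rt})$, then every such model satisfies $u(x)>u(y)$.
   Context: $X$ is a finite set of options; $C=\{(x,y): x,y\in X,\ x\neq y\}$; $D\subseteq C$ is a fixed non-empty set with $(x,y)\in D\Rightarrow (y,x)\in D$. An SCF $p$ assigns to each $(x,y)\in D$ a number $p(x,y)>0$ with $p(x,y)+p(y,x)=1$. An SCF-RT is a pair $(p,f)$ where $p$ is an SCF and $f$ assigns to each $(x,y)\in D$ a strictly positive density $f(x,y)$ on $\mathbb{R}^+$ with cdf $F(x,y)$. A RUM is a pair $(u,g)$ with $u:X\to\mathbb{R}$ and $g$ assigning to each $(x,y)\in C$ a density $g(x,y)$ on $\mathbb{R}$ (cdf $G(x,y)$) with $\int v\,g(x,y)(v)\,dv=u(x)-u(y)$, $g(x,y)(v)=g(y,x)(-v)$ for all $v$, and connected support. A RUM-CF is $(u,g,r)$ with $(u,g)$ a RUM and $r:\mathbb{R}^{++}\to\mathbb{R}^+$ continuous, strictly decreasing where $r(v)>0$, $\lim_{v\to0}r(v)=\infty$, $\lim_{v\to\infty}r(v)=0$; $r^{-1}(t)$ ($t>0$) is the inverse of $r$ restricted to $\{r>0\}$. It rationalizes $(p,f)$ if for all $(x,y)\in D$: $G(x,y)(0)=p(y,x)$ and $\frac{1-G(x,y)(r^{-1}(t))}{1-G(x,y)(0)}=F(x,y)(t)$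 for all $t>0$. For cdfs $G,H$ on $\mathbb{R}^+$ and $q>0$, $G$ $q$-FSD $H$ means $G(t)\leq qH(t)$ for all $t\geq0$. The binary relation $R^{rt}$ on $X$: $(x,y)\in R^{rt}$ iff either $x=y$, or $(x,y)\in D$ and $F(y,x)$ $q$-FSD $F(x,y)$ with $q=p(x,y)/p(y,x)$. For a binary relation $R$ on $X$, $T(R)$ is its transitive closure ($(x,y)\in T(R)$ iff there is a sequence $x_1=x,x_2,\dots,x_n=y$, $n\geq2$, with $(x_k,x_{k+1})\in R$ for all $k$), and $T_P(R)$ is the asymmetric part of $T(R)$: $(x,y)\in T_P(R)$ iff $(x,y)\in T(R)$ and $(y,x)\notin T(R)$. *)

theory Defs
  imports "HOL-Analysis.Analysis"
begin

definition pairsC :: "'a set \<Rightarrow> ('a \<times> 'a) set" where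
  "pairsC X = {(x, y). x \<in> X \<and> y \<in> X \<and> x \<noteq> y}"

definition domain_ok :: "'a set \<Rightarrow> ('a \<times> 'a) set \<Rightarrow> bool" where
  "domain_ok X D \<longleftrightarrow> finite X \<and> D \<subseteq> pairsC X \<and> D \<noteq> {} \<and>
     (\<forall>x y. (x, y) \<in> D \<longrightarrow> (y, x) \<in> D)"

definition pos_density_Rplus :: "(real \<Rightarrow> real) \<Rightarrow> bool" where
  "pos_density_Rplus h \<longleftrightarrow> h \<in> borel_measurable borel \<and> (\<forall>t\<ge>0. h t > 0) \<and>
     (\<integral>\<^sup>+ t. ennreal (h t) * indicator {0..} t \<partial>lborel) = 1"

definition cdf_Rplus :: "(real \<Rightarrow> real) \<Rightarrow> real \<Rightarrow> real" where
  "cdf_Rplus h t = (LINT s:{0..t}|lborel. h s)"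

definition density_R :: "(real \<Rightarrow> real) \<Rightarrow> bool" where
  "density_R h \<longleftrightarrow> h \<in> borel_measurable borel \<and> (\<forall>v. h v \<ge> 0) \<and>
     (\<integral>\<^sup>+ v. ennreal (h v) \<partial>lborel) = 1"

definition cdf_R :: "(real \<Rightarrow> real) \<Rightarrow> real \<Rightarrow> real" where
  "cdf_R h v = (LINT s:{..v}|lborel. h s)"

definition SCF :: "('a \<times> 'a) set \<Rightarrow> ('a \<Rightarrow> 'a \<Rightarrow> real) \<Rightarrow> bool" where
  "SCF D p \<longleftrightarrow> (\<forall>(x, y) \<in> D. p x y > 0 \<and> p x y + p y x = 1)"

definition SCF_RT :: "('a \<times> 'a) set \<Rightarrow> ('a \<Rightarrow> 'a \<Rightarrow> real)
    \<Rightarrow> ('a \<Rightarrow> 'a \<Rightarrow> real \<Rightarrow> real) \<Rightarrow> bool" where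
  "SCF_RT D p f \<longleftrightarrow> SCF D p \<and> (\<forall>(x, y) \<in> D. pos_density_Rplus (f x y))"

text \<open>RUM (u, g); the support of g(x,y) is read as the set where the density is positive.\<close>
definition RUM :: "'a set \<Rightarrow> ('a \<Rightarrow> real) \<Rightarrow> ('a \<Rightarrow> 'a \<Rightarrow> real \<Rightarrow> real) \<Rightarrow> bool" where
  "RUM X u g \<longleftrightarrow> (\<forall>(x, y) \<in> pairsC X.
      density_R (g x y) \<and>
      has_bochner_integral lborel (\<lambda>v. v * g x y v) (u x - u y) \<and>
      (\<forall>v. g x y v = g y x (- v)) \<and>
      connected {v. g x y v > 0})"

definition choice_fn :: "(real \<Rightarrow> real) \<Rightarrow> bool" where
  "choice_fn r \<longleftrightarrow> (\<forall>v>0. r v \<ge> 0) \<and> continuous_on {0<..} r \<and>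
     (\<forall>a b. 0 < a \<and> a < b \<and> r a > 0 \<longrightarrow> r b < r a) \<and>
     filterlim r at_top (at_right 0) \<and> (r \<longlongrightarrow> 0) at_top"

text \<open>Inverse of r restricted to {v > 0. r v > 0}, used for t > 0.\<close>
definition rinv :: "(real \<Rightarrow> real) \<Rightarrow> real \<Rightarrow> real" where
  "rinv r t = (THE v. v > 0 \<and> r v > 0 \<and> r v = t)"

definition RUM_CF :: "'a set \<Rightarrow> ('a \<Rightarrow> real) \<Rightarrow> ('a \<Rightarrow> 'a \<Rightarrow> real \<Rightarrow> real)
    \<Rightarrow> (real \<Rightarrow> real) \<Rightarrow> bool" where
  "RUM_CF X u g r \<longleftrightarrow> RUM X u g \<and> choice_fn r"

definition rationalizes :: "('a \<times> 'a) set \<Rightarrow> ('a \<Rightarrow> 'a \<Rightarrow> real) \<Rightarrow> ('a \<Rightarrow> 'a \<Rightarrow> real \<Rightarrow> real)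
    \<Rightarrow> ('a \<Rightarrow> real) \<Rightarrow> ('a \<Rightarrow> 'a \<Rightarrow> real \<Rightarrow> real) \<Rightarrow> (real \<Rightarrow> real) \<Rightarrow> bool" where
  "rationalizes D p f u g r \<longleftrightarrow> (\<forall>(x, y) \<in> D.
      cdf_R (g x y) 0 = p y x \<and>
      (\<forall>t>0. (1 - cdf_R (g x y) (rinv r t)) / (1 - cdf_R (g x y) 0) = cdf_Rplus (f x y) t))"

definition rationalizable_RUM_CF :: "'a set \<Rightarrow> ('a \<times> 'a) set \<Rightarrow> ('a \<Rightarrow> 'a \<Rightarrow> real)
    \<Rightarrow> ('a \<Rightarrow> 'a \<Rightarrow> real \<Rightarrow> real) \<Rightarrow> bool" where
  "rationalizable_RUM_CF X D p f \<longleftrightarrow>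
     (\<exists>u g r. RUM_CF X u g r \<and> rationalizes D p f u g r)"

definition qFSD :: "real \<Rightarrow> (real \<Rightarrow> real) \<Rightarrow> (real \<Rightarrow> real) \<Rightarrow> bool" where
  "qFSD q G H \<longleftrightarrow> (\<forall>t\<ge>0. G t \<le> q * H t)"

definition Rrt :: "'a set \<Rightarrow> ('a \<times> 'a) set \<Rightarrow> ('a \<Rightarrow> 'a \<Rightarrow> real)
    \<Rightarrow> ('a \<Rightarrow> 'a \<Rightarrow> real \<Rightarrow> real) \<Rightarrow> ('a \<times> 'a) set" where
  "Rrt X D p f = {(x, y). x \<in> X \<and> y \<in> X \<and>
     (x = y \<or> ((x, y) \<in> D \<and>
        qFSD (p x y / p y x) (cdf_Rplus (f y x)) (cdf_Rplus (f x y))))}"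

definition TP :: "('a \<times> 'a) set \<Rightarrow> ('a \<times> 'a) set" where
  "TP R = {(x, y). (x, y) \<in> trancl R \<and> (y, x) \<notin> trancl R}"

end

theory Submission
  imports Defs "HOL-Probability.Probability_Mass_Function"
begin


lemma cf_interval:
  assumes r: "choice_fn r" and a: "a > 0" "r a > 0" and b: "b > 0" "r b = 0"
  shows "a < b"
proof (rule ccontr)
  assume "\<not> a < b"
  then have ba: "b < a" using a b by (cases "a = b") auto
  have cont: "continuous_on {b..a} r"
    using r b unfolding choice_fn_def by (auto elim: continuous_on_subset)
  obtain c where c: "b \<le> c" "c \<le> a" "r c = r a / 2"
    using IVT'[of r b "r a / 2" a] cont ba a b by auto
  have "c \<noteq> a" using c a by auto
  hence "c < a" using c by auto
  moreover have "c > 0" using c b by auto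
  moreover have "r c > 0" using c a by auto
  ultimately have "r a < r c" using r unfolding choice_fn_def by blast
  thus False using c a by auto
qed

lemma cf_inj:
  assumes r: "choice_fn r" and "v > 0" "r v > 0" "s > 0" "r s > 0" "r v = r s"
  shows "v = s"
proof -
  have dec: "\<And>a b. 0 < a \<Longrightarrow> a < b \<Longrightarrow> r a > 0 \<Longrightarrow> r b < r a" using r unfolding choice_fn_def by blast
  show ?thesis using dec[of v s] dec[of s v] assms by (cases v s rule: linorder_cases) auto
qed

lemma rinv_eq:
  assumes r: "choice_fn r" and "s > 0" "r s > 0"
  shows "rinv r (r s) = s"
  unfolding rinv_def
  by (rule the_equality) (use assms cf_inj[OF r] in auto)

lemma cf_surj:
  assumes r: "choice_fn r" and t: "t > 0"
  shows "\<exists>c>0. r c = t"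
proof -
  have "eventually (\<lambda>x. r x > t) (at_right 0)"
    using r unfolding choice_fn_def filterlim_at_top_dense by blast
  then obtain b where b: "b > 0" "\<And>y. y > 0 \<Longrightarrow> y < b \<Longrightarrow> r y > t"
    unfolding eventually_at_right_field by auto
  define a where "a = b / 2"
  have a: "a > 0" "r a > t" using b by (auto simp: a_def)
  have "eventually (\<lambda>x. r x < t) at_top"
    using r t unfolding choice_fn_def by (auto simp: order_tendsto_iff)
  then obtain N where N: "\<And>x. x \<ge> N \<Longrightarrow> r x < t"
    unfolding eventually_at_top_linorder by auto
  define c where "c = max N (a + 1)"
  have c: "c > a" "r c < t" using N by (auto simp: c_def)
  have cont: "continuous_on {a..c} r"
    using r a unfolding choice_fn_def by (auto elim: continuous_on_subset)
  obtain z where "a \<le> z" "z \<le> c" "r z = t"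
    using IVT2'[of r c t a] cont a c by auto
  thus ?thesis using a by (intro exI[of _ z]) auto
qed

lemma rinv_pos:
  assumes r: "choice_fn r" and t: "t > 0"
  shows "rinv r t > 0 \<and> r (rinv r t) = t"
proof -
  obtain c where c: "c > 0" "r c = t" using cf_surj[OF r t] by auto
  hence "rinv r t = c" using rinv_eq[OF r, of c] t by auto
  thus ?thesis using c by auto
qed



lemma dens_int:
  assumes "density_R h"
  shows "integrable lborel h" "integral\<^sup>L lborel h = 1" "h \<in> borel_measurable borel"
proof -
  have m: "h \<in> borel_measurable borel" and nn: "\<And>v. h v \<ge> 0" and one: "(\<integral>\<^sup>+ v. ennreal (h v) \<partial>lborel) = 1"
    using assms unfolding density_R_def by auto
  show "integrable lborel h" using m nn one by (intro integrableI_nonneg) auto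
  show "integral\<^sup>L lborel h = 1" using m nn one by (subst integral_eq_nn_integral) auto
  show "h \<in> borel_measurable borel" by fact
qed

lemma tail_eq:
  assumes "density_R h"
  shows "1 - cdf_R h s = (\<integral>v. indicator {s<..} v * h v \<partial>lborel)"
proof -
  note d = dens_int[OF assms]
  have si: "set_integrable lborel A h" if "A \<in> sets borel" for A
    unfolding set_integrable_def using d that by (intro integrable_mult_indicator) auto
  have "(LINT v:({..s} \<union> {s<..})|lborel. h v) = (LINT v:{..s}|lborel. h v) + (LINT v:{s<..}|lborel. h v)"
    by (rule set_integral_Un) (auto intro: si)
  moreover have "{..s} \<union> {s<..} = UNIV" by auto
  ultimately show ?thesis using d unfolding cdf_R_def set_lebesgue_integral_def by simp
qed

lemma int_ind:
  fixes h :: "real \<Rightarrow> real"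
  assumes "A \<in> sets borel" "integrable lborel h"
  shows "integrable lborel (\<lambda>v. indicator A v * h v)"
  using integrable_mult_indicator[of A lborel h] assms by simp

lemma sint_single: "(LINT x:{c::real}|lborel. f x) = (0::real)"
  unfolding set_lebesgue_integral_def
  by (rule integral_eq_zero_AE, rule eventually_mono[OF AE_lborel_singleton[of c]]) simp

lemma tail_nonneg:
  assumes "density_R h"
  shows "(\<integral>v. indicator {s<..} v * h v \<partial>lborel) \<ge> 0"
  using assms unfolding density_R_def by (intro integral_nonneg_AE) (auto split: split_indicator)

lemma tail_mono:
  assumes "density_R h" "s \<le> s'"
  shows "(\<integral>v. indicator {s'<..} v * h v \<partial>lborel) \<le> (\<integral>v. indicator {s<..} v * h v \<partial>lborel)"
proof -
  note d = dens_int[OF assms(1)]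
  have nn: "\<And>v. h v \<ge> 0" using assms unfolding density_R_def by auto
  show ?thesis
    using d nn assms(2)
    by (intro integral_mono int_ind) (auto split: split_indicator)
qed

lemma cdf_cont:
  assumes "density_R h"
  shows "continuous_on {0<..} (cdf_R h)"
proof -
  note d = dens_int[OF assms]
  have si: "set_integrable lborel A h" if "A \<in> sets borel" for A
    unfolding set_integrable_def using d that by (intro integrable_mult_indicator) auto
  have c: "continuous_on UNIV (\<lambda>b. LBINT x:{0..b}. h x)"
    by (rule continuous_on_LBINT) (auto intro: si)
  have eq: "cdf_R h s = (LINT v:{..<0}|lborel. h v) + (LBINT x:{0..s}. h x)" if "s > 0" for s
  proof -
    have "{..s} = {..<0} \<union> {0..s}" using that by auto
    hence "cdf_R h s = (LINT v:({..<0} \<union> {0..s})|lborel. h v)" unfolding cdf_R_def by simp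
    also have "\<dots> = (LINT v:{..<0}|lborel. h v) + (LBINT x:{0..s}. h x)"
      by (rule set_integral_Un) (auto intro: si)
    finally show ?thesis .
  qed
  have "continuous_on {0<..} (\<lambda>s. (LINT v:{..<0}|lborel. h v) + (LBINT x:{0..s}. h x))"
    by (intro continuous_intros continuous_on_subset[OF c]) auto
  thus ?thesis using eq by (subst continuous_on_cong[OF refl]) auto
qed

lemma rplus_tendsto:
  assumes "pos_density_Rplus f"
  shows "(cdf_Rplus f \<longlongrightarrow> 0) (at_right 0)"
proof -
  have m: "f \<in> borel_measurable borel" and nn: "\<And>t. t \<ge> 0 \<Longrightarrow> f t > 0"
    and one: "(\<integral>\<^sup>+ t. ennreal (f t) * indicator {0..} t \<partial>lborel) = 1"
    using assms unfolding pos_density_Rplus_def by auto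
  have "integrable lborel (\<lambda>t. indicator {0..} t * f t)"
  proof (rule integrableI_nonneg)
    show "(\<lambda>t. indicator {0..} t * f t) \<in> borel_measurable lborel" using m by simp
    show "AE x in lborel. 0 \<le> indicator {0..} x * f x" using nn by (auto split: split_indicator intro: less_imp_le)
    have "(\<integral>\<^sup>+ t. ennreal (indicator {0..} t * f t) \<partial>lborel) = (\<integral>\<^sup>+ t. ennreal (f t) * indicator {0..} t \<partial>lborel)"
      by (intro nn_integral_cong) (auto split: split_indicator)
    thus "(\<integral>\<^sup>+ t. ennreal (indicator {0..} t * f t) \<partial>lborel) < \<infinity>" using one by simp
  qed
  hence si0: "set_integrable lborel {0..} f" unfolding set_integrable_def by simp
  have si: "set_integrable lborel {0..b} f" for b
    by (rule set_integrable_subset[OF si0]) auto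
  have c: "continuous_on UNIV (\<lambda>b. LBINT x:{0..b}. f x)"
    by (rule continuous_on_LBINT) (auto intro: si)
  hence "((\<lambda>b. LBINT x:{0..b}. f x) \<longlongrightarrow> (LBINT x:{0..0}. f x)) (at 0)"
    by (metis continuous_on_eq_continuous_at isCont_def open_UNIV UNIV_I)
  moreover have "(LBINT x:{0..0::real}. f x) = 0" using sint_single by simp
  ultimately have "((\<lambda>b. LBINT x:{0..b}. f x) \<longlongrightarrow> 0) (at_right 0)"
    by (auto intro: tendsto_within_subset)
  thus ?thesis unfolding cdf_Rplus_def[abs_def] .
qed

lemma cdf_Rplus_0: "cdf_Rplus f 0 = 0"
  unfolding cdf_Rplus_def using sint_single by simp



lemma layer_cake:
  assumes d: "density_R h" and iv: "integrable lborel (\<lambda>v. v * h v)"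
  shows "integrable lborel (\<lambda>s. indicator {0<..} s * (1 - cdf_R h s))"
    and "(\<integral>v. indicator {0<..} v * (v * h v) \<partial>lborel) = (\<integral>s. indicator {0<..} s * (1 - cdf_R h s) \<partial>lborel)"
proof -
  note dd = dens_int[OF d]
  have nn: "\<And>v. h v \<ge> 0" using d unfolding density_R_def by auto
  have [measurable]: "h \<in> borel_measurable borel" using dd by simp
  define T where "T s = 1 - cdf_R h s" for s
  have T_eq: "T s = (\<integral>v. indicator {s<..} v * h v \<partial>lborel)" for s
    unfolding T_def by (rule tail_eq[OF d])
  have T_nn: "T s \<ge> 0" for s unfolding T_eq by (rule tail_nonneg[OF d])
  have Tenn: "(\<integral>\<^sup>+ v. (if 0 < s \<and> s < v then ennreal (h v) else 0) \<partial>lborel) = ennreal (T s) * indicator {0<..} s" for s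
  proof (cases "s > 0")
    case True
    have "(\<integral>\<^sup>+ v. (if 0 < s \<and> s < v then ennreal (h v) else 0) \<partial>lborel)
        = (\<integral>\<^sup>+ v. ennreal (indicator {s<..} v * h v) \<partial>lborel)"
      using True by (intro nn_integral_cong) (auto split: split_indicator)
    also have "\<dots> = ennreal (T s)" unfolding T_eq
      by (rule nn_integral_eq_integral) (auto intro!: int_ind dd simp: nn split: split_indicator)
    finally show ?thesis using True by simp
  qed simp
  have inner: "(\<integral>\<^sup>+ s. (if 0 < s \<and> s < v then ennreal (h v) else 0) \<partial>lborel) = ennreal (indicator {0<..} v * (v * h v))" for v
  proof (cases "v > 0")
    case True
    have "(\<integral>\<^sup>+ s. (if 0 < s \<and> s < v then ennreal (h v) else 0) \<partial>lborel)
        = (\<integral>\<^sup>+ s. ennreal (h v) * indicator {0<..<v} s \<partial>lborel)"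
      by (intro nn_integral_cong) (auto split: split_indicator)
    also have "\<dots> = ennreal (h v) * ennreal v"
      using True by (subst nn_integral_cmult_indicator) auto
    finally show ?thesis using True nn by (simp add: ennreal_mult' mult.commute)
  next
    case False
    hence "(\<lambda>s. if 0 < s \<and> s < v then ennreal (h v) else 0) = (\<lambda>s. 0)" by auto
    thus ?thesis using False by simp
  qed
  have meas: "(\<lambda>(v, s). if 0 < s \<and> s < v then ennreal (h v) else 0) \<in> borel_measurable (lborel \<Otimes>\<^sub>M lborel)"
    by measurable
  have fub: "(\<integral>\<^sup>+ s. (\<integral>\<^sup>+ v. (if 0 < s \<and> s < v then ennreal (h v) else 0) \<partial>lborel) \<partial>lborel)
      = (\<integral>\<^sup>+ v. (\<integral>\<^sup>+ s. (if 0 < s \<and> s < v then ennreal (h v) else 0) \<partial>lborel) \<partial>lborel)"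
    by (rule lborel_pair.Fubini'[OF meas])
  have ip: "integrable lborel (\<lambda>v. indicator {0<..} v * (v * h v))"
    by (rule int_ind[OF _ iv]) simp
  have pnn: "0 \<le> indicator {0<..} v * (v * h v)" for v
    using nn by (auto split: split_indicator)
  have L: "(\<integral>\<^sup>+ v. ennreal (indicator {0<..} v * (v * h v)) \<partial>lborel) = ennreal (\<integral>v. indicator {0<..} v * (v * h v) \<partial>lborel)"
    by (rule nn_integral_eq_integral[OF ip]) (simp add: pnn)
  have key: "(\<integral>\<^sup>+ s. ennreal (indicator {0<..} s * T s) \<partial>lborel) = ennreal (\<integral>v. indicator {0<..} v * (v * h v) \<partial>lborel)"
  proof -
    have "(\<integral>\<^sup>+ s. ennreal (indicator {0<..} s * T s) \<partial>lborel) = (\<integral>\<^sup>+ s. ennreal (T s) * indicator {0<..} s \<partial>lborel)"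
      by (intro nn_integral_cong) (auto split: split_indicator)
    also have "\<dots> = (\<integral>\<^sup>+ s. (\<integral>\<^sup>+ v. (if 0 < s \<and> s < v then ennreal (h v) else 0) \<partial>lborel) \<partial>lborel)"
      by (simp add: Tenn)
    also have "\<dots> = (\<integral>\<^sup>+ v. ennreal (indicator {0<..} v * (v * h v)) \<partial>lborel)"
      by (simp add: fub inner)
    finally show ?thesis using L by simp
  qed
  have Tc: "continuous_on {0<..} T"
    unfolding T_def by (intro continuous_intros cdf_cont[OF d])
  have Tm: "(\<lambda>s. indicator {0<..} s * T s) \<in> borel_measurable lborel"
    using borel_measurable_continuous_on_indicator[OF _ Tc] by simp
  have Ti: "integrable lborel (\<lambda>s. indicator {0<..} s * T s)"
    by (rule integrableI_nonneg[OF Tm]) (auto simp: key T_nn)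
  show "integrable lborel (\<lambda>s. indicator {0<..} s * (1 - cdf_R h s))"
    using Ti unfolding T_def .
  have "(\<integral>s. indicator {0<..} s * T s \<partial>lborel) = (\<integral>v. indicator {0<..} v * (v * h v) \<partial>lborel)"
    using Tm T_nn key pnn by (subst integral_eq_nn_integral) (auto simp: integral_nonneg_AE)
  thus "(\<integral>v. indicator {0<..} v * (v * h v) \<partial>lborel) = (\<integral>s. indicator {0<..} s * (1 - cdf_R h s) \<partial>lborel)"
    unfolding T_def by simp
qed



lemma mean_decomp:
  assumes R: "RUM X u g" and xy: "(x, y) \<in> pairsC X"
  shows "integrable lborel (\<lambda>s. indicator {0<..} s * ((1 - cdf_R (g x y) s) - (1 - cdf_R (g y x) s)))"
    and "u x - u y = (\<integral>s. indicator {0<..} s * ((1 - cdf_R (g x y) s) - (1 - cdf_R (g y x) s)) \<partial>lborel)"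
proof -
  have yx: "(y, x) \<in> pairsC X" using xy unfolding pairsC_def by auto
  have A: "density_R (g x y)" "has_bochner_integral lborel (\<lambda>v. v * g x y v) (u x - u y)"
      "\<And>v. g x y v = g y x (- v)"
    using R xy unfolding RUM_def by auto
  have B: "density_R (g y x)" "has_bochner_integral lborel (\<lambda>v. v * g y x v) (u y - u x)"
    using R yx unfolding RUM_def by auto
  have i1: "integrable lborel (\<lambda>v. v * g x y v)" and e1: "(\<integral>v. v * g x y v \<partial>lborel) = u x - u y"
    using A(2) by (auto simp: has_bochner_integral_iff)
  have i2: "integrable lborel (\<lambda>v. v * g y x v)"
    using B(2) by (auto simp: has_bochner_integral_iff)
  note L1 = layer_cake[OF A(1) i1] and L2 = layer_cake[OF B(1) i2]
  have ip: "integrable lborel (\<lambda>v. indicator {0<..} v * (v * g x y v))" by (rule int_ind[OF _ i1]) simp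
  have in_: "integrable lborel (\<lambda>v. indicator {..<0} v * (v * g x y v))" by (rule int_ind[OF _ i1]) simp
  have "(\<integral>v. v * g x y v \<partial>lborel) = (\<integral>v. indicator {0<..} v * (v * g x y v) + indicator {..<0} v * (v * g x y v) \<partial>lborel)"
    by (intro Bochner_Integration.integral_cong) (auto split: split_indicator)
  also have "\<dots> = (\<integral>v. indicator {0<..} v * (v * g x y v) \<partial>lborel) + (\<integral>v. indicator {..<0} v * (v * g x y v) \<partial>lborel)"
    by (rule Bochner_Integration.integral_add[OF ip in_])
  also have "(\<integral>v. indicator {..<0} v * (v * g x y v) \<partial>lborel)
      = (\<integral>w. indicator {..<0} (0 + (-1) * w) * ((0 + (-1) * w) * g x y (0 + (-1) * w)) \<partial>lborel)"
    using lborel_integral_real_affine[where c="-1" and t=0 and f="\<lambda>v. indicator {..<0} v * (v * g x y v)"] by simp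
  also have "\<dots> = (\<integral>w. - (indicator {0<..} w * (w * g y x w)) \<partial>lborel)"
    by (intro Bochner_Integration.integral_cong) (auto simp: A(3) split: split_indicator)
  also have "\<dots> = - (\<integral>w. indicator {0<..} w * (w * g y x w) \<partial>lborel)"
    by (rule Bochner_Integration.integral_minus)
  finally have "u x - u y = (\<integral>s. indicator {0<..} s * (1 - cdf_R (g x y) s) \<partial>lborel) - (\<integral>s. indicator {0<..} s * (1 - cdf_R (g y x) s) \<partial>lborel)"
    using e1 L1(2) L2(2) by simp
  also have "\<dots> = (\<integral>s. indicator {0<..} s * (1 - cdf_R (g x y) s) - indicator {0<..} s * (1 - cdf_R (g y x) s) \<partial>lborel)"
    by (rule Bochner_Integration.integral_diff[symmetric, OF L1(1) L2(1)])
  also have "\<dots> = (\<integral>s. indicator {0<..} s * ((1 - cdf_R (g x y) s) - (1 - cdf_R (g y x) s)) \<partial>lborel)"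
    by (simp add: right_diff_distrib)
  finally show "u x - u y = (\<integral>s. indicator {0<..} s * ((1 - cdf_R (g x y) s) - (1 - cdf_R (g y x) s)) \<partial>lborel)" .
  have "integrable lborel (\<lambda>s. indicator {0<..} s * (1 - cdf_R (g x y) s) - indicator {0<..} s * (1 - cdf_R (g y x) s))"
    by (rule Bochner_Integration.integrable_diff[OF L1(1) L2(1)])
  thus "integrable lborel (\<lambda>s. indicator {0<..} s * ((1 - cdf_R (g x y) s) - (1 - cdf_R (g y x) s)))"
    by (simp add: right_diff_distrib)
qed

lemma zero_of_int_zero:
  fixes \<Phi> :: "real \<Rightarrow> real"
  assumes i: "integrable lborel (\<lambda>s. indicator {0<..} s * \<Phi> s)"
    and z: "(\<integral>s. indicator {0<..} s * \<Phi> s \<partial>lborel) = 0"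
    and nn: "\<And>s. s > 0 \<Longrightarrow> \<Phi> s \<ge> 0"
    and c: "continuous_on {0<..} \<Phi>"
    and s0: "s0 > 0"
  shows "\<Phi> s0 = 0"
proof (rule ccontr)
  assume ne: "\<Phi> s0 \<noteq> 0"
  hence pos: "\<Phi> s0 > 0" using nn s0 by force
  have "AE s in lborel. indicator {0<..} s * \<Phi> s = 0"
    using integral_nonneg_eq_0_iff_AE[OF i] z nn by (auto split: split_indicator)
  then obtain N where N: "{s \<in> space lborel. \<not> indicator {0<..} s * \<Phi> s = 0} \<subseteq> N" "emeasure lborel N = 0" "N \<in> sets lborel"
    by (rule AE_E)
  obtain d where d: "d > 0" "\<And>s. s \<in> {0<..} \<Longrightarrow> dist s s0 < d \<Longrightarrow> dist (\<Phi> s) (\<Phi> s0) < \<Phi> s0"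
    using c s0 pos unfolding continuous_on_iff by (meson greaterThan_iff)
  define e where "e = min d s0"
  have e: "e > 0" "e \<le> d" "e \<le> s0" using d s0 by (auto simp: e_def)
  have sub: "{s0 - e<..<s0 + e} \<subseteq> N"
  proof
    fix s assume s: "s \<in> {s0 - e<..<s0 + e}"
    hence sp: "s > 0" using e by auto
    have "dist s s0 < d" using s e by (auto simp: dist_real_def abs_if)
    hence "dist (\<Phi> s) (\<Phi> s0) < \<Phi> s0" using d sp by auto
    hence "\<Phi> s > 0" by (auto simp: dist_real_def abs_if split: if_splits)
    hence "s \<in> {s \<in> space lborel. \<not> indicator {0<..} s * \<Phi> s = 0}" using sp by auto
    thus "s \<in> N" using N(1) by blast
  qed
  have "emeasure lborel {s0 - e<..<s0 + e} \<le> emeasure lborel N"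
    by (rule emeasure_mono[OF sub N(3)])
  moreover have "emeasure lborel {s0 - e<..<s0 + e} = ennreal (2 * e)" using e by simp
  ultimately show False using N(2) e by simp
qed



context
  fixes X :: "'a set" and D p f u g r
  assumes dom: "domain_ok X D" and sr: "SCF_RT D p f" and cf: "RUM_CF X u g r"
    and rat: "rationalizes D p f u g r"
begin

lemma r_cf: "choice_fn r" using cf unfolding RUM_CF_def by auto
lemma r_RUM: "RUM X u g" using cf unfolding RUM_CF_def by auto

lemma D_facts:
  assumes "(a, b) \<in> D"
  shows "(b, a) \<in> D" "(a, b) \<in> pairsC X" "(b, a) \<in> pairsC X" "p a b > 0" "p b a > 0" "p a b + p b a = 1"
    "density_R (g a b)" "density_R (g b a)" "pos_density_Rplus (f a b)" "a \<in> X" "b \<in> X" "a \<noteq> b"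
proof -
  show ba: "(b, a) \<in> D" using dom assms unfolding domain_ok_def by auto
  show ab': "(a, b) \<in> pairsC X" using dom assms unfolding domain_ok_def by auto
  show ba': "(b, a) \<in> pairsC X" using dom ba unfolding domain_ok_def by auto
  show "p a b > 0" "p a b + p b a = 1" using sr assms unfolding SCF_RT_def SCF_def by auto
  show "p b a > 0" using sr ba unfolding SCF_RT_def SCF_def by auto
  show "density_R (g a b)" using r_RUM ab' unfolding RUM_def by auto
  show "density_R (g b a)" using r_RUM ba' unfolding RUM_def by auto
  show "pos_density_Rplus (f a b)" using sr assms unfolding SCF_RT_def by auto
  show "a \<in> X" "b \<in> X" "a \<noteq> b" using ab' unfolding pairsC_def by auto
qed

lemma tailF:
  assumes ab: "(a, b) \<in> D" and t: "t > 0"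
  shows "1 - cdf_R (g a b) (rinv r t) = p a b * cdf_Rplus (f a b) t"
proof -
  note Df = D_facts[OF ab]
  have "cdf_R (g a b) 0 = p b a"
    and e: "(1 - cdf_R (g a b) (rinv r t)) / (1 - cdf_R (g a b) 0) = cdf_Rplus (f a b) t"
    using rat ab t unfolding rationalizes_def by auto
  hence pne: "1 - cdf_R (g a b) 0 = p a b" using Df by simp
  have "1 - cdf_R (g a b) (rinv r t) = cdf_Rplus (f a b) t * (1 - cdf_R (g a b) 0)"
    using e Df(4) pne by (simp add: divide_eq_eq)
  thus ?thesis using pne by (simp add: mult.commute)
qed

lemma support:
  assumes ab: "(a, b) \<in> D" and s: "s > 0" "r s = 0"
  shows "1 - cdf_R (g a b) s = 0"
proof -
  note Df = D_facts[OF ab]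
  have le: "1 - cdf_R (g a b) s \<le> p a b * cdf_Rplus (f a b) t" if t: "t > 0" for t
  proof -
    have w: "rinv r t > 0" "r (rinv r t) = t" using rinv_pos[OF r_cf t] by auto
    have "rinv r t < s" using cf_interval[OF r_cf w(1) _ s] w t by simp
    hence "1 - cdf_R (g a b) s \<le> 1 - cdf_R (g a b) (rinv r t)"
      unfolding tail_eq[OF Df(7)] by (intro tail_mono[OF Df(7)]) simp
    thus ?thesis using tailF[OF ab t] by simp
  qed
  have lim: "((\<lambda>t. p a b * cdf_Rplus (f a b) t) \<longlongrightarrow> p a b * 0) (at_right 0)"
    by (intro tendsto_intros rplus_tendsto[OF Df(9)])
  have "1 - cdf_R (g a b) s \<le> p a b * 0"
    by (rule tendsto_le[OF _ lim tendsto_const]) (auto simp: eventually_at_right_field le intro!: exI[of _ 1])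
  moreover have "1 - cdf_R (g a b) s \<ge> 0" unfolding tail_eq[OF Df(7)] by (rule tail_nonneg[OF Df(7)])
  ultimately show ?thesis by simp
qed

lemma link_weak:
  assumes ab: "(a, b) \<in> D" and q: "qFSD (p a b / p b a) (cdf_Rplus (f b a)) (cdf_Rplus (f a b))"
    and s: "s > 0"
  shows "(1 - cdf_R (g a b) s) - (1 - cdf_R (g b a) s) \<ge> 0"
proof (cases "r s > 0")
  case True
  note Df = D_facts[OF ab]
  have t: "r s > 0" by fact
  have rs: "rinv r (r s) = s" using rinv_eq[OF r_cf s True] .
  have "cdf_Rplus (f b a) (r s) \<le> (p a b / p b a) * cdf_Rplus (f a b) (r s)"
    using q t unfolding qFSD_def by auto
  hence "p b a * cdf_Rplus (f b a) (r s) \<le> p a b * cdf_Rplus (f a b) (r s)"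
    using Df by (simp add: field_simps)
  thus ?thesis using tailF[OF ab t] tailF[OF Df(1) t] rs by simp
next
  case False
  hence "r s = 0" using r_cf s unfolding choice_fn_def by force
  thus ?thesis using support[OF ab s] support[OF D_facts(1)[OF ab] s] by simp
qed

lemma link_rev:
  assumes ab: "(a, b) \<in> D" and z: "\<And>s. s > 0 \<Longrightarrow> (1 - cdf_R (g a b) s) - (1 - cdf_R (g b a) s) = 0"
  shows "qFSD (p b a / p a b) (cdf_Rplus (f a b)) (cdf_Rplus (f b a))"
  unfolding qFSD_def
proof (intro allI impI)
  fix t :: real assume "t \<ge> 0"
  note Df = D_facts[OF ab]
  show "cdf_Rplus (f a b) t \<le> p b a / p a b * cdf_Rplus (f b a) t"
  proof (cases "t = 0")
    case True thus ?thesis by (simp add: cdf_Rplus_0)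
  next
    case False
    hence t: "t > 0" using \<open>t \<ge> 0\<close> by simp
    have w: "rinv r t > 0" using rinv_pos[OF r_cf t] by auto
    have "p a b * cdf_Rplus (f a b) t = p b a * cdf_Rplus (f b a) t"
      using z[OF w] tailF[OF ab t] tailF[OF Df(1) t] by simp
    thus ?thesis using Df by (simp add: field_simps)
  qed
qed

lemma step_weak:
  assumes "(a, b) \<in> Rrt X D p f"
  shows "u b \<le> u a"
proof -
  consider "a = b" | "(a, b) \<in> D" "qFSD (p a b / p b a) (cdf_Rplus (f b a)) (cdf_Rplus (f a b))"
    using assms unfolding Rrt_def by auto
  thus ?thesis
  proof cases
    case 2
    note Df = D_facts[OF 2(1)]
    note M = mean_decomp[OF r_RUM Df(2)]
    have "0 \<le> (\<integral>s. indicator {0<..} s * ((1 - cdf_R (g a b) s) - (1 - cdf_R (g b a) s)) \<partial>lborel)"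
      using link_weak[OF 2] by (intro integral_nonneg_AE) (auto split: split_indicator)
    thus ?thesis using M(2) by simp
  qed simp
qed

lemma trancl_weak:
  assumes "(a, b) \<in> trancl (Rrt X D p f)"
  shows "u b \<le> u a"
  using assms
  by (induction rule: trancl_induct) (auto dest: step_weak)

lemma step_rev:
  assumes ab: "(a, b) \<in> Rrt X D p f" and eq: "u a = u b"
  shows "(b, a) \<in> Rrt X D p f"
proof -
  consider "a = b" | "(a, b) \<in> D" "qFSD (p a b / p b a) (cdf_Rplus (f b a)) (cdf_Rplus (f a b))"
    using assms unfolding Rrt_def by auto
  thus ?thesis
  proof cases
    case 1 thus ?thesis using ab by simp
  next
    case 2
    note Df = D_facts[OF 2(1)]
    note M = mean_decomp[OF r_RUM Df(2)]
    have c: "continuous_on {0<..} (\<lambda>s. (1 - cdf_R (g a b) s) - (1 - cdf_R (g b a) s))"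
      by (intro continuous_intros cdf_cont Df)
    have z: "(1 - cdf_R (g a b) s) - (1 - cdf_R (g b a) s) = 0" if "s > 0" for s
      by (rule zero_of_int_zero[OF M(1) _ _ c that]) (use M(2) eq link_weak[OF 2] in auto)
    have "qFSD (p b a / p a b) (cdf_Rplus (f a b)) (cdf_Rplus (f b a))"
      by (rule link_rev[OF 2(1) z])
    thus ?thesis unfolding Rrt_def using Df by auto
  qed
qed

lemma trancl_rev:
  assumes "(a, b) \<in> trancl (Rrt X D p f)"
  shows "u a \<le> u b \<Longrightarrow> (b, a) \<in> trancl (Rrt X D p f)"
  using assms
proof (induction rule: trancl_induct)
  case (base b)
  hence "u a = u b" using step_weak by force
  thus ?case using step_rev base by auto
next
  case (step c b)
  have "u c \<le> u a" using trancl_weak step by auto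
  moreover have "u b \<le> u c" using step_weak step by auto
  ultimately have e: "u a = u c" "u c = u b" using step by auto
  have "(c, a) \<in> trancl (Rrt X D p f)" using step e by auto
  moreover have "(b, c) \<in> Rrt X D p f" using step_rev step e by auto
  ultimately show ?case by (meson trancl_into_trancl2)
qed

end


theorem corollary2:
  fixes X :: "'a set" and D :: "('a \<times> 'a) set"
    and p :: "'a \<Rightarrow> 'a \<Rightarrow> real" and f :: "'a \<Rightarrow> 'a \<Rightarrow> real \<Rightarrow> real"
    and x y :: 'a
  assumes "domain_ok X D"
    and "SCF_RT D p f"
    and "rationalizable_RUM_CF X D p f"
    and "x \<in> X" and "y \<in> X"
  shows "((x, y) \<in> trancl (Rrt X D p f) \<longrightarrow>
           (\<forall>u g r. RUM_CF X u g r \<and> rationalizes D p f u g r \<longrightarrow> u x \<ge> u y))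
       \<and> ((x, y) \<in> TP (Rrt X D p f) \<longrightarrow>
           (\<forall>u g r. RUM_CF X u g r \<and> rationalizes D p f u g r \<longrightarrow> u x > u y))"
proof (intro conjI impI allI)
  fix u g r
  assume xy: "(x, y) \<in> trancl (Rrt X D p f)" and m: "RUM_CF X u g r \<and> rationalizes D p f u g r"
  show "u x \<ge> u y" using trancl_weak[OF assms(1,2) conjunct1[OF m] conjunct2[OF m] xy] .
next
  fix u g r
  assume xy: "(x, y) \<in> TP (Rrt X D p f)" and m: "RUM_CF X u g r \<and> rationalizes D p f u g r"
  have t: "(x, y) \<in> trancl (Rrt X D p f)" and nt: "(y, x) \<notin> trancl (Rrt X D p f)"
    using xy unfolding TP_def by auto
  show "u x > u y"
  proof (rule ccontr)
    assume "\<not> u x > u y"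
    hence "u x \<le> u y" by simp
    thus False using trancl_rev[OF assms(1,2) conjunct1[OF m] conjunct2[OF m] t] nt by blast
  qed
qed

end
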